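(* There exist infinitely many pairs $(a,b)$ of integers such that (i) $a\ge 36$ and $a$ is even, and $b\ge 21$ and $b$ is odd; (ii) $3b(b-1)=a(a-1)$; and (iii) $b\le 7a/12$. *)

theory Defs
  imports Complex_Main
begin

end

theory Submission
  imports Defs
begin

fun sq :: "nat \<Rightarrow> int \<times> int" where
  "sq 0 = (36, 21)"
| "sq (Suc n) = (case sq n of (a, b) \<Rightarrow> (97*a + 168*b - 132, 56*a + 97*b - 76))"

definition P :: "int \<times> int \<Rightarrow> bool" where
  "P = (\<lambda>(a, b). a \<ge> 36 \<and> even a \<and> b \<ge> 21 \<and> odd b
           \<and> 3 * b * (b - 1) = a * (a - 1)
           \<and> real_of_int b \<le> 7 * real_of_int a / 12)"

lemma step:
  fixes a b :: int
  assumes "P (a, b)"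
  shows "P (97*a + 168*b - 132, 56*a + 97*b - 76)"
proof -
  from assms have h: "a \<ge> 36" "even a" "b \<ge> 21" "odd b" "3 * b * (b - 1) = a * (a - 1)"
    "12 * b \<le> 7 * a" by (auto simp: P_def)
  have e: "3 * (56*a + 97*b - 76) * ((56*a + 97*b - 76) - 1) = (97*a + 168*b - 132) * ((97*a + 168*b - 132) - 1)"
    using h(5) by (simp add: algebra_simps)
  have "12 * (56*a + 97*b - 76) \<le> 7 * (97*a + 168*b - 132)" using h by (simp add: algebra_simps)
  hence "real_of_int (12 * (56*a + 97*b - 76)) \<le> real_of_int (7 * (97*a + 168*b - 132))"
    by (simp only: of_int_le_iff)
  hence r: "real_of_int (56*a + 97*b - 76) \<le> 7 * real_of_int (97*a + 168*b - 132) / 12"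
    by simp
  show ?thesis unfolding P_def using h e r by auto
qed

lemma sqP: "P (sq n) \<and> fst (sq n) < fst (sq (Suc n))"
proof (induction n)
  case 0
  show ?case by (simp add: P_def)
next
  case (Suc n)
  obtain a b where ab: "sq n = (a, b)" by fastforce
  have "P (sq (Suc n))" using Suc step ab by simp
  moreover obtain c d where cd: "sq (Suc n) = (c, d)" by fastforce
  moreover have "c < 97*c + 168*d - 132" using calculation cd by (auto simp: P_def)
  ultimately show ?case using cd by simp
qed

theorem lemma4p4:
  shows "infinite {(a :: int, b :: int). a \<ge> 36 \<and> even a \<and> b \<ge> 21 \<and> odd b
           \<and> 3 * b * (b - 1) = a * (a - 1)
           \<and> real_of_int b \<le> 7 * real_of_int a / 12}"
proof -
  have sm: "strict_mono (\<lambda>n. fst (sq n))"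
    unfolding strict_mono_Suc_iff using sqP by auto
  have "inj sq"
  proof
    fix x y assume "sq x = sq y"
    hence "fst (sq x) = fst (sq y)" by simp
    thus "x = y" using strict_mono_eq[OF sm] by blast
  qed
  hence "infinite (range sq)" using finite_imageD by blast
  moreover have "range sq \<subseteq> {(a :: int, b :: int). a \<ge> 36 \<and> even a \<and> b \<ge> 21 \<and> odd b
           \<and> 3 * b * (b - 1) = a * (a - 1)
           \<and> real_of_int b \<le> 7 * real_of_int a / 12}"
    proof
    fix p assume "p \<in> range sq"
    then obtain n where "p = sq n" by auto
    with sqP[of n] show "p \<in> {(a :: int, b :: int). a \<ge> 36 \<and> even a \<and> b \<ge> 21 \<and> odd b
           \<and> 3 * b * (b - 1) = a * (a - 1)
           \<and> real_of_int b \<le> 7 * real_of_int a / 12}" by (cases p) (simp add: P_def)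
  qed
  ultimately show ?thesis using infinite_super by blast
qed

end
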